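(* Let $f:\mathbb R^n\to\mathbb R$ be continuously differentiable, and let $\{x^k\}$ be generated by a linesearch method $x^{k+1}=x^k+t_kd^k$ ($k\in\mathbb N$) with stepsizes $t_k\ge 0$ and directions $d^k\in\mathbb R^n$ such that: (a) $\{d^k\}$ is gradient associated with $\{x^k\}$; (b) $0$ is an accumulation point of $\{d^k\}$; (c) $\sum_{k=1}^\infty t_k\|d^k\|^2<\infty$. Then every accumulation point of $\{x^k\}$ is a stationary point of $f$ (i.e. $\nabla f(\bar x)=0$). Moreover, if $\{t_k\}$ is bounded from above, then: (i) if $\{x^k\}$ is bounded, the set of accumulation points of $\{x^k\}$ is nonempty, compact, and connected; (ii) if $\{x^k\}$ has an isolated accumulation point, then the whole sequence $\{x^k\}$ converges to it.
   Context: A direction sequence $\{d^k\}$ is called gradient associated with $\{x^k\}$ if for every infinite set $J\subset\mathbb N$, $d^k\to0$ as $k\to\infty,\ k\in J$ implies $\nabla f(x^k)\to 0$ as $k\to\infty,\ k\in J$. *)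

theory Defs
  imports "HOL-Analysis.Analysis"
begin

definition accum_point :: "(nat \<Rightarrow> 'a::topological_space) \<Rightarrow> 'a \<Rightarrow> bool" where
  "accum_point x a \<longleftrightarrow> (\<exists>r. strict_mono r \<and> (x \<circ> r) \<longlonglongrightarrow> a)"

text \<open>Gradient associated directions; gradf is the gradient of f.
  Limits along an infinite index set J use the filter sequentially restricted to J.\<close>
definition gradient_associated ::
  "('a::real_normed_vector \<Rightarrow> 'a) \<Rightarrow> (nat \<Rightarrow> 'a) \<Rightarrow> (nat \<Rightarrow> 'a) \<Rightarrow> bool" where
  "gradient_associated gradf d x \<longleftrightarrow>
     (\<forall>J::nat set. infinite J \<longrightarrow>
        (d \<longlongrightarrow> 0) (inf sequentially (principal J)) \<longrightarrow>
        ((\<lambda>k. gradf (x k)) \<longlongrightarrow> 0) (inf sequentially (principal J)))"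

end

theory Submission
  imports Defs
begin

lemma rec_subseq:
  fixes P :: "nat \<Rightarrow> nat \<Rightarrow> bool"
  assumes "\<And>m N. \<exists>k\<ge>N. P m k"
  shows "\<exists>s. strict_mono s \<and> (\<forall>m. P m (s m))"
proof -
  have "\<forall>m N. \<exists>k. k \<ge> N \<and> P m k" using assms by blast
  then obtain pick where pick: "\<And>m N. pick m N \<ge> N \<and> P m (pick m N)"
    by metis
  define s where "s = rec_nat (pick 0 0) (\<lambda>m p. pick (Suc m) (Suc p))"
  have s0: "s 0 = pick 0 0" and sS: "\<And>m. s (Suc m) = pick (Suc m) (Suc (s m))"
    by (simp_all add: s_def)
  have "strict_mono s"
    unfolding strict_mono_Suc_iff using pick sS by (metis Suc_le_lessD)
  moreover have "P m (s m)" for m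
    by (cases m) (use pick s0 sS in auto)
  ultimately show ?thesis by blast
qed

lemma freq_subseq:
  fixes P :: "nat \<Rightarrow> bool"
  assumes "\<And>N. \<exists>k\<ge>N. P k"
  shows "\<exists>s::nat\<Rightarrow>nat. strict_mono s \<and> (\<forall>m. P (s m))"
proof -
  have "\<And>m N. \<exists>k\<ge>N. P k" using assms by blast
  from rec_subseq[of "\<lambda>m k. P k", OF this] show ?thesis by blast
qed

lemma acc_freq:
  assumes "accum_point x a" "e > 0"
  shows "\<exists>k\<ge>N. dist (x k) a < e"
proof -
  obtain r where r: "strict_mono r" "(x \<circ> r) \<longlonglongrightarrow> a"
    using assms(1) unfolding accum_point_def by blast
  have "\<forall>\<^sub>F m in sequentially. dist ((x \<circ> r) m) a < e"
    using r(2) assms(2) by (rule tendstoD)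
  then obtain M where M: "\<And>m. m \<ge> M \<Longrightarrow> dist (x (r m)) a < e"
    unfolding eventually_sequentially by auto
  have "max M N \<le> r (max M N)" using seq_suble[OF r(1)] .
  then show ?thesis using M[of "max M N"] by (intro exI[of _ "r (max M N)"]) auto
qed

lemma acc_iff:
  fixes x :: "nat \<Rightarrow> 'a::real_normed_vector"
  shows "accum_point x a \<longleftrightarrow> (\<forall>e>0. \<forall>N. \<exists>k\<ge>N. dist (x k) a < e)"
proof
  assume A: "accum_point x a" show "\<forall>e>0. \<forall>N. \<exists>k\<ge>N. dist (x k) a < e"
    using acc_freq[OF A] by blast
next
  assume H: "\<forall>e>0. \<forall>N. \<exists>k\<ge>N. dist (x k) a < e"
  have "\<exists>k\<ge>N. dist (x k) a < 1 / real (Suc m)" for m N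
    using H[rule_format, of "1 / real (Suc m)" N] by simp
  from rec_subseq[of "\<lambda>m k. dist (x k) a < 1 / real (Suc m)", OF this]
  obtain s :: "nat \<Rightarrow> nat" where s: "strict_mono s" "\<And>m. dist (x (s m)) a < 1 / real (Suc m)"
    by blast
  have "(\<lambda>m. x (s m) - a) \<longlonglongrightarrow> 0"
    by (rule LIMSEQ_norm_0) (use s(2) in \<open>simp add: dist_norm\<close>)
  then have "(\<lambda>m. x (s m)) \<longlonglongrightarrow> a" using Lim_null[of "\<lambda>m. x (s m)" a sequentially] by blast
  then have "(x \<circ> s) \<longlonglongrightarrow> a" by (simp add: o_def)
  then show "accum_point x a" using s(1) unfolding accum_point_def by blast
qed

lemma acc_sub:
  assumes "strict_mono s" "strict_mono r" "((x \<circ> s) \<circ> r) \<longlonglongrightarrow> b"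
  shows "accum_point x b"
  unfolding accum_point_def using assms strict_mono_o[OF assms(1,2)]
  by (metis comp_assoc)

lemma filt_sub:
  assumes "strict_mono s" "(f \<circ> s) \<longlonglongrightarrow> l"
  shows "(f \<longlongrightarrow> l) (inf sequentially (principal (range s)))"
  unfolding tendsto_def eventually_inf_principal
proof (intro allI impI)
  fix S assume "open S" "l \<in> S"
  then have "\<forall>\<^sub>F m in sequentially. f (s m) \<in> S" using assms(2) unfolding tendsto_def by auto
  then obtain M where M: "\<And>m. m \<ge> M \<Longrightarrow> f (s m) \<in> S" unfolding eventually_sequentially by auto
  show "\<forall>\<^sub>F k in sequentially. k \<in> range s \<longrightarrow> f k \<in> S"
    unfolding eventually_sequentially
  proof (intro exI[of _ "s M"] allI impI)
    fix k assume "s M \<le> k" "k \<in> range s"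
    then obtain m where "k = s m" by auto
    with \<open>s M \<le> k\<close> have "M \<le> m" using strict_mono_less_eq[OF assms(1)] by auto
    then show "f k \<in> S" using M \<open>k = s m\<close> by auto
  qed
qed

lemma filt_sub2:
  assumes "strict_mono s" "(f \<longlongrightarrow> l) (inf sequentially (principal (range s)))"
  shows "(f \<circ> s) \<longlonglongrightarrow> l"
  unfolding tendsto_def
proof (intro allI impI)
  fix S assume "open S" "l \<in> S"
  then have "\<forall>\<^sub>F k in sequentially. k \<in> range s \<longrightarrow> f k \<in> S"
    using assms(2) unfolding tendsto_def eventually_inf_principal by auto
  from eventually_subseq[OF assms(1) this] show "\<forall>\<^sub>F m in sequentially. (f \<circ> s) m \<in> S"
    by simp
qed

lemma crossing:
  "\<not> Q m \<Longrightarrow> Q p \<Longrightarrow> m \<le> p \<Longrightarrow> \<exists>q\<ge>m. q < p \<and> \<not> Q q \<and> Q (Suc q)"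
proof (induction p)
  case 0 then show ?case by simp
next
  case (Suc p)
  show ?case
  proof (cases "m = Suc p")
    case True with Suc show ?thesis by simp
  next
    case False
    then have "m \<le> p" using Suc by simp
    show ?thesis
    proof (cases "Q p")
      case True with Suc.IH Suc.prems \<open>m \<le> p\<close> show ?thesis by (meson less_SucI)
    next
      case False with Suc.prems \<open>m \<le> p\<close> show ?thesis by auto
    qed
  qed
qed


lemma not_tendsto0:
  fixes v :: "nat \<Rightarrow> 'a::real_normed_vector"
  assumes "v \<longlonglongrightarrow> 0" "c > 0" "\<And>m. m \<ge> M \<Longrightarrow> c \<le> norm (v m)"
  shows False
proof -
  have "\<forall>\<^sub>F m in sequentially. dist (v m) 0 < c" using assms(1,2) by (rule tendstoD)
  then obtain M' where "\<And>m. m \<ge> M' \<Longrightarrow> norm (v m) < c" unfolding eventually_sequentially by auto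
  from this[of "max M M'"] assms(3)[of "max M M'"] show False by auto
qed

lemma part1:
  fixes gradf :: "real ^ 'n \<Rightarrow> real ^ 'n"
    and x d :: "nat \<Rightarrow> real ^ 'n"
    and t :: "nat \<Rightarrow> real"
  assumes C1: "continuous_on UNIV gradf"
    and step: "\<And>k. x (Suc k) = x k + t k *\<^sub>R d k"
    and t_nonneg: "\<And>k. t k \<ge> 0"
    and ga: "gradient_associated gradf d x"
    and d_acc: "accum_point d 0"
    and summ: "summable (\<lambda>k. t k * (norm (d k))\<^sup>2)"
    and acc: "accum_point x a"
  shows "gradf a = 0"
proof (rule ccontr)
  assume ne: "gradf a \<noteq> 0"
  define g where "g = norm (gradf a)"
  have g: "g > 0" using ne by (simp add: g_def)
  have ga': "\<And>s. strict_mono s \<Longrightarrow> (d \<circ> s) \<longlonglongrightarrow> 0 \<Longrightarrow> (\<lambda>m. gradf (x (s m))) \<longlonglongrightarrow> 0"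
  proof -
    fix s :: "nat \<Rightarrow> nat" assume s: "strict_mono s" "(d \<circ> s) \<longlonglongrightarrow> 0"
    have "infinite (range s)"
      using range_inj_infinite strict_mono_imp_inj_on[OF s(1)] by blast
    moreover have "(d \<longlongrightarrow> 0) (inf sequentially (principal (range s)))"
      using filt_sub[OF s] .
    ultimately have "((\<lambda>k. gradf (x k)) \<longlongrightarrow> 0) (inf sequentially (principal (range s)))"
      using ga unfolding gradient_associated_def by blast
    from filt_sub2[OF s(1) this] show "(\<lambda>m. gradf (x (s m))) \<longlonglongrightarrow> 0" by (simp add: o_def)
  qed
  obtain r where r: "strict_mono r" "(d \<circ> r) \<longlonglongrightarrow> 0"
    using d_acc unfolding accum_point_def by blast
  have A: "(\<lambda>m. gradf (x (r m))) \<longlonglongrightarrow> 0" using ga'[OF r] .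
  have "isCont gradf a" using C1 continuous_on_eq_continuous_at open_UNIV by blast
  then obtain \<rho> where \<rho>: "\<rho> > 0" "\<And>y. dist y a < \<rho> \<Longrightarrow> dist (gradf y) (gradf a) < g/2"
    unfolding continuous_at_eps_delta using g by (metis half_gt_zero)
  have big: "g/2 \<le> norm (gradf y)" if "dist y a < \<rho>" for y
  proof -
    have "norm (gradf a) - norm (gradf y) \<le> norm (gradf a - gradf y)" by (rule norm_triangle_ineq2)
    also have "\<dots> = dist (gradf y) (gradf a)" by (simp add: dist_norm norm_minus_commute)
    finally show ?thesis using \<rho>(2)[OF that] by (simp add: g_def)
  qed
  have "\<exists>\<delta>>0. \<exists>N. \<forall>k\<ge>N. dist (x k) a < \<rho> \<longrightarrow> \<delta> \<le> norm (d k)"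
  proof (rule ccontr)
    assume H: "\<not> ?thesis"
    have "\<And>m N. \<exists>k\<ge>N. dist (x k) a < \<rho> \<and> norm (d k) < 1 / real (Suc m)"
    proof -
      fix m N
      have "\<not> (\<forall>k\<ge>N. dist (x k) a < \<rho> \<longrightarrow> 1 / real (Suc m) \<le> norm (d k))"
        using H by (metis divide_pos_pos of_nat_0_less_iff zero_less_Suc zero_less_one)
      then show "\<exists>k\<ge>N. dist (x k) a < \<rho> \<and> norm (d k) < 1 / real (Suc m)" by auto
    qed
    from rec_subseq[of "\<lambda>m k. dist (x k) a < \<rho> \<and> norm (d k) < 1 / real (Suc m)", OF this]
    obtain s :: "nat \<Rightarrow> nat" where s: "strict_mono s"
      "\<And>m. dist (x (s m)) a < \<rho> \<and> norm (d (s m)) < 1 / real (Suc m)"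
      by blast
    have "(\<lambda>m. d (s m)) \<longlonglongrightarrow> 0" by (rule LIMSEQ_norm_0) (use s(2) in auto)
    then have "(\<lambda>m. gradf (x (s m))) \<longlonglongrightarrow> 0" using ga'[OF s(1)] by (simp add: o_def)
    then show False
      by (rule not_tendsto0[where c="g/2" and M=0]) (use g big s(2) in auto)
  qed
  then obtain \<delta> N where \<delta>: "\<delta> > 0" "\<And>k. k \<ge> N \<Longrightarrow> dist (x k) a < \<rho> \<Longrightarrow> \<delta> \<le> norm (d k)"
    by blast
  define c where "c k = (if dist (x k) a < \<rho> then norm (x (Suc k) - x k) else 0)" for k
  have c_nonneg: "c k \<ge> 0" for k by (simp add: c_def)
  have "summable c"
  proof (rule summable_comparison_test')
    show "summable (\<lambda>k. t k * (norm (d k))\<^sup>2 / \<delta>)" using summ by (rule summable_divide)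
    fix k assume k: "N \<le> k"
    show "norm (c k) \<le> t k * (norm (d k))\<^sup>2 / \<delta>"
    proof (cases "dist (x k) a < \<rho>")
      case True
      have dk: "\<delta> \<le> norm (d k)" using \<delta>(2)[OF k True] .
      have "t k * norm (d k) * \<delta> \<le> t k * norm (d k) * norm (d k)"
        by (rule mult_left_mono[OF dk]) (simp add: t_nonneg)
      then have "t k * norm (d k) \<le> t k * (norm (d k))\<^sup>2 / \<delta>"
        using \<delta>(1) by (simp add: pos_le_divide_eq power2_eq_square mult.assoc)
      then show ?thesis using True t_nonneg[of k] by (simp add: c_def step)
    next
      case False
      then show ?thesis using t_nonneg[of k] \<delta>(1) by (simp add: c_def)
    qed
  qed
  then obtain M where M: "\<And>m n. m \<ge> M \<Longrightarrow> norm (sum c {m..<n}) < \<rho>/2"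
    unfolding summable_Cauchy using \<rho>(1) by (metis half_gt_zero)
  obtain m where m: "m \<ge> M" "dist (x m) a < \<rho>/2"
    using acc_freq[OF acc, of "\<rho>/2" M] \<rho>(1) by auto
  have inv: "dist (x p) a \<le> dist (x m) a + sum c {m..<p}" if "m \<le> p" for p
    using that
  proof (induction p rule: dec_induct)
    case base then show ?case by simp
  next
    case (step n)
    have "sum c {m..<n} < \<rho>/2" using M[OF m(1), of n] sum_nonneg[of "{m..<n}" c] c_nonneg by auto
    then have "dist (x n) a < \<rho>" using step.IH m(2) by linarith
    then have cn: "c n = dist (x (Suc n)) (x n)" by (simp add: c_def dist_norm)
    have "dist (x (Suc n)) a \<le> dist (x (Suc n)) (x n) + dist (x n) a" by (rule dist_triangle)
    then show ?case using step.IH cn step.hyps by simp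
  qed
  have stay: "dist (x p) a < \<rho>" if "m \<le> p" for p
  proof -
    have "sum c {m..<p} < \<rho>/2" using M[OF m(1), of p] sum_nonneg[of "{m..<p}" c] c_nonneg by auto
    then show ?thesis using inv[OF that] m(2) by linarith
  qed
  show False
  proof (rule not_tendsto0[OF A, where c="g/2" and M=m])
    show "g/2 > 0" using g by simp
    fix j assume "j \<ge> m"
    then have "m \<le> r j" using seq_suble[OF r(1), of j] by linarith
    then show "g/2 \<le> norm (gradf (x (r j)))" using big stay by blast
  qed
qed


lemma incr:
  fixes x d :: "nat \<Rightarrow> real ^ 'n" and t :: "nat \<Rightarrow> real"
  assumes step: "\<And>k. x (Suc k) = x k + t k *\<^sub>R d k"
    and t_nonneg: "\<And>k. t k \<ge> 0"
    and summ: "summable (\<lambda>k. t k * (norm (d k))\<^sup>2)"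
    and T: "\<And>k. t k \<le> T"
    and e: "e > 0"
  shows "\<exists>M. \<forall>k\<ge>M. dist (x (Suc k)) (x k) < e"
proof -
  have T0: "T \<ge> 0" using t_nonneg[of 0] T[of 0] by linarith
  have u: "(\<lambda>k. t k * (norm (d k))\<^sup>2) \<longlonglongrightarrow> 0" using summ by (rule summable_LIMSEQ_zero)
  have "(\<lambda>k. sqrt (T * (t k * (norm (d k))\<^sup>2))) \<longlonglongrightarrow> sqrt (T * 0)"
    by (intro tendsto_real_sqrt tendsto_mult tendsto_const u)
  then have g0: "(\<lambda>k. sqrt (T * (t k * (norm (d k))\<^sup>2))) \<longlonglongrightarrow> 0" by simp
  have "(\<lambda>k. x (Suc k) - x k) \<longlonglongrightarrow> 0"
  proof (rule Lim_null_comparison[OF _ g0], rule always_eventually, rule allI)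
    fix k
    have "(norm (x (Suc k) - x k))\<^sup>2 = t k * (t k * (norm (d k))\<^sup>2)"
      using t_nonneg[of k] by (simp add: step power2_eq_square)
    also have "\<dots> \<le> T * (t k * (norm (d k))\<^sup>2)"
      by (rule mult_right_mono[OF T]) (simp add: t_nonneg)
    finally show "norm (x (Suc k) - x k) \<le> sqrt (T * (t k * (norm (d k))\<^sup>2))"
      by (rule real_le_rsqrt)
  qed
  then have "\<forall>\<^sub>F k in sequentially. dist (x (Suc k) - x k) 0 < e" using e by (rule tendstoD)
  then show ?thesis unfolding eventually_sequentially by (simp add: dist_norm)
qed

lemma part_iso:
  fixes x :: "nat \<Rightarrow> real ^ 'n"
  assumes inc: "\<And>e. e > 0 \<Longrightarrow> \<exists>M. \<forall>k\<ge>M. dist (x (Suc k)) (x k) < e"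
    and acc: "accum_point x a" and e: "e > 0"
    and iso: "\<And>b. accum_point x b \<Longrightarrow> dist b a < e \<Longrightarrow> b = a"
  shows "x \<longlonglongrightarrow> a"
proof (rule ccontr)
  assume "\<not> x \<longlonglongrightarrow> a"
  then obtain \<epsilon> where \<epsilon>: "\<epsilon> > 0" "\<not> (\<forall>\<^sub>F k in sequentially. dist (x k) a < \<epsilon>)"
    unfolding tendsto_iff by blast
  then have far: "\<And>N. \<exists>k\<ge>N. \<epsilon> \<le> dist (x k) a"
    unfolding eventually_sequentially by (meson not_le)
  define \<eta> where "\<eta> = min \<epsilon> (e/2)"
  have \<eta>: "\<eta> > 0" "\<eta> \<le> \<epsilon>" "\<eta> < e" using \<epsilon> e by (auto simp: \<eta>_def)
  obtain M where M: "\<And>k. k \<ge> M \<Longrightarrow> dist (x (Suc k)) (x k) < \<eta>/2"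
    using inc[of "\<eta>/2"] \<eta> by auto
  have ann: "\<exists>k\<ge>N. \<eta>/2 \<le> dist (x k) a \<and> dist (x k) a \<le> \<eta>" for N
  proof -
    obtain m where m: "m \<ge> max N M" "dist (x m) a < \<eta>/2"
      using acc_freq[OF acc, of "\<eta>/2" "max N M"] \<eta> by auto
    obtain p where p: "p \<ge> m" "\<epsilon> \<le> dist (x p) a" using far by blast
    obtain q where q: "q \<ge> m" "q < p" "\<not> \<eta>/2 \<le> dist (x q) a" "\<eta>/2 \<le> dist (x (Suc q)) a"
      using crossing[of "\<lambda>q. \<eta>/2 \<le> dist (x q) a" m p] m p \<eta> by auto
    have "dist (x (Suc q)) a \<le> dist (x (Suc q)) (x q) + dist (x q) a" by (rule dist_triangle)
    moreover have "dist (x (Suc q)) (x q) < \<eta>/2" using M[of q] q m by auto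
    ultimately show ?thesis using q m by (intro exI[of _ "Suc q"]) auto
  qed
  obtain s :: "nat \<Rightarrow> nat" where s: "strict_mono s" "\<And>m. \<eta>/2 \<le> dist (x (s m)) a \<and> dist (x (s m)) a \<le> \<eta>"
    using freq_subseq[of "\<lambda>k. \<eta>/2 \<le> dist (x k) a \<and> dist (x k) a \<le> \<eta>", OF ann] by blast
  have "bounded (range (x \<circ> s))"
    by (rule bounded_subset[OF bounded_cball[of a \<eta>]]) (use s(2) in \<open>auto simp: dist_commute\<close>)
  then obtain b r where br: "strict_mono r" "((x \<circ> s) \<circ> r) \<longlonglongrightarrow> b"
    using bounded_imp_convergent_subsequence by blast
  have accb: "accum_point x b" using acc_sub[OF s(1) br] .
  have lim: "(\<lambda>j. dist (((x \<circ> s) \<circ> r) j) a) \<longlonglongrightarrow> dist b a"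
    by (intro tendsto_dist br(2) tendsto_const)
  have "\<eta>/2 \<le> dist b a" by (rule LIMSEQ_le_const[OF lim]) (use s(2) in auto)
  moreover have "dist b a \<le> \<eta>" by (rule LIMSEQ_le_const2[OF lim]) (use s(2) in auto)
  ultimately show False using iso[OF accb] \<eta> by auto
qed


lemma part_bdd:
  fixes x :: "nat \<Rightarrow> real ^ 'n"
  assumes inc: "\<And>e. e > 0 \<Longrightarrow> \<exists>M. \<forall>k\<ge>M. dist (x (Suc k)) (x k) < e"
    and bdd: "bounded (range x)"
  shows "{a. accum_point x a} \<noteq> {} \<and> compact {a. accum_point x a} \<and> connected {a. accum_point x a}"
proof (intro conjI)
  define A where "A = {a. accum_point x a}"
  obtain l r where "strict_mono r" "(x \<circ> r) \<longlonglongrightarrow> l"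
    using bounded_imp_convergent_subsequence[OF bdd] by blast
  then show "{a. accum_point x a} \<noteq> {}" unfolding accum_point_def by blast
  have Aeq: "A = (\<Inter>N. closure (x ` {N..}))"
  proof (intro equalityI subsetI)
    fix a assume "a \<in> A"
    then have H: "\<forall>e>0. \<forall>N. \<exists>k\<ge>N. dist (x k) a < e" using acc_iff A_def by blast
    show "a \<in> (\<Inter>N. closure (x ` {N..}))"
    proof (rule InterI, clarify)
      fix N
      show "a \<in> closure (x ` {N..})" unfolding closure_approachable
      proof (intro allI impI)
        fix e :: real assume "e > 0"
        then obtain k where "k \<ge> N" "dist (x k) a < e" using H by blast
        then show "\<exists>y\<in>x ` {N..}. dist y a < e" by blast
      qed
    qed
  next
    fix a assume a: "a \<in> (\<Inter>N. closure (x ` {N..}))"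
    have "\<forall>e>0. \<forall>N. \<exists>k\<ge>N. dist (x k) a < e"
    proof (intro allI impI)
      fix e :: real and N assume "e > 0"
      moreover have "a \<in> closure (x ` {N..})" using a by blast
      ultimately obtain y where "y \<in> x ` {N..}" "dist y a < e" unfolding closure_approachable by blast
      then show "\<exists>k\<ge>N. dist (x k) a < e" by auto
    qed
    then show "a \<in> A" using acc_iff A_def by blast
  qed
  have clA: "closed A" unfolding Aeq by (rule closed_INT) (simp add: closed_closure)
  have "A \<subseteq> closure (x ` {0..})" unfolding Aeq by (rule Inter_lower) blast
  then have "A \<subseteq> closure (range x)" by simp
  then have bA: "bounded A" by (rule bounded_subset[OF bounded_closure[OF bdd]])
  have "compact A" by (simp add: compact_eq_bounded_closed clA bA)
  then show "compact {a. accum_point x a}" by (simp add: A_def)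
  show "connected {a. accum_point x a}"
    unfolding A_def[symmetric] connected_closed_set[OF clA]
  proof (rule notI, elim exE conjE)
    fix A1 A2 assume c1: "closed A1" and c2: "closed A2" and n1: "A1 \<noteq> {}" and n2: "A2 \<noteq> {}"
      and un: "A1 \<union> A2 = A" and dis: "A1 \<inter> A2 = {}"
    have "A1 \<subseteq> A" using un by blast
    then have "bounded A1" by (rule bounded_subset[OF bA])
    then have "compact A1" by (simp add: compact_eq_bounded_closed c1)
    from separate_compact_closed[OF this c2 dis]
    obtain D where D: "D > 0" "\<And>u v. u \<in> A1 \<Longrightarrow> v \<in> A2 \<Longrightarrow> D \<le> dist u v"
      by blast
    define \<delta> where "\<delta> = D/3"
    have \<delta>: "\<delta> > 0" using D by (simp add: \<delta>_def)
    define U where "U = (\<Union>u\<in>A1. ball u \<delta>)"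
    define V where "V = (\<Union>v\<in>A2. ball v \<delta>)"
    have oU: "open U" unfolding U_def by (rule open_UN) simp
    have oV: "open V" unfolding V_def by (rule open_UN) simp
    have UV: "U \<inter> V = {}"
    proof (rule ccontr)
      assume "U \<inter> V \<noteq> {}"
      then obtain y where "y \<in> U" "y \<in> V" by blast
      then obtain u v where "u \<in> A1" "v \<in> A2" "y \<in> ball u \<delta>" "y \<in> ball v \<delta>"
        unfolding U_def V_def by blast
      then have uv: "u \<in> A1" "v \<in> A2" "dist u y < \<delta>" "dist v y < \<delta>" by simp_all
      have "dist u v \<le> dist u y + dist v y" by (metis dist_triangle dist_commute)
      then show False using D(1) D(2)[OF uv(1,2)] uv(3,4) unfolding \<delta>_def by linarith
    qed
    have AUV: "A \<subseteq> U \<union> V"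
    proof
      fix b assume "b \<in> A"
      then have "b \<in> A1 \<or> b \<in> A2" using un by auto
      moreover have "b \<in> ball b \<delta>" using \<delta> by simp
      ultimately show "b \<in> U \<union> V" unfolding U_def V_def by blast
    qed
    have "\<exists>M1. \<forall>k\<ge>M1. x k \<in> U \<union> V"
    proof (rule ccontr)
      assume "\<not> ?thesis"
      then have "\<And>N. \<exists>k\<ge>N. x k \<notin> U \<union> V" by blast
      from freq_subseq[of "\<lambda>k. x k \<notin> U \<union> V", OF this]
      obtain s :: "nat \<Rightarrow> nat" where s: "strict_mono s" "\<And>m. x (s m) \<notin> U \<union> V" by blast
      have "bounded (range (x \<circ> s))" by (rule bounded_subset[OF bdd]) (auto simp: o_def)
      then obtain b r where br: "strict_mono r" "((x \<circ> s) \<circ> r) \<longlonglongrightarrow> b"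
        using bounded_imp_convergent_subsequence by blast
      have "b \<in> A" using acc_sub[OF s(1) br] by (simp add: A_def)
      moreover have "b \<in> - (U \<union> V)"
        by (rule closed_sequentially[OF _ _ br(2)]) (use oU oV s(2) in \<open>auto intro: closed_Compl open_Un\<close>)
      ultimately show False using AUV by auto
    qed
    then obtain M1 where M1: "\<And>k. k \<ge> M1 \<Longrightarrow> x k \<in> U \<union> V" by blast
    obtain M2 where M2: "\<And>k. k \<ge> M2 \<Longrightarrow> dist (x (Suc k)) (x k) < \<delta>"
      using inc[OF \<delta>] by blast
    have keep: "x (Suc k) \<in> U" if kk: "k \<ge> max M1 M2" and xU: "x k \<in> U" for k
    proof (rule ccontr)
      assume "x (Suc k) \<notin> U"
      then have "x (Suc k) \<in> V" using M1[of "Suc k"] kk by auto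
      then obtain v where v: "v \<in> A2" "x (Suc k) \<in> ball v \<delta>" unfolding V_def by blast
      then have v: "v \<in> A2" "dist v (x (Suc k)) < \<delta>" by simp_all
      obtain u where u: "u \<in> A1" "x k \<in> ball u \<delta>" using xU unfolding U_def by blast
      then have u: "u \<in> A1" "dist u (x k) < \<delta>" by simp_all
      have "dist u v \<le> dist u (x k) + dist (x k) v" by (rule dist_triangle)
      moreover have "dist (x k) v \<le> dist (x k) (x (Suc k)) + dist v (x (Suc k))" by (metis dist_triangle dist_commute)
      moreover have "dist (x k) (x (Suc k)) < \<delta>" using M2[of k] kk by (simp add: dist_commute)
      ultimately show False using D(2)[OF u(1) v(1)] u v by (auto simp: \<delta>_def)
    qed
    obtain a1 where a1: "a1 \<in> A1" using n1 by blast
    then have "accum_point x a1" using un A_def by auto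
    from acc_freq[OF this \<delta>, of "max M1 M2"]
    obtain k0 where k0: "k0 \<ge> max M1 M2" "dist (x k0) a1 < \<delta>" by blast
    have "x k0 \<in> ball a1 \<delta>" using k0 by (simp add: dist_commute)
    then have "x k0 \<in> U" using a1 unfolding U_def by blast
    have allU: "x p \<in> U" if "k0 \<le> p" for p
      using that
    proof (induction p rule: dec_induct)
      case base then show ?case using \<open>x k0 \<in> U\<close> .
    next
      case (step n) then show ?case using keep k0 by auto
    qed
    obtain a2 where a2: "a2 \<in> A2" using n2 by blast
    then have "accum_point x a2" using un A_def by auto
    from acc_freq[OF this \<delta>, of k0]
    obtain k where k: "k \<ge> k0" "dist (x k) a2 < \<delta>" by blast
    have "x k \<in> ball a2 \<delta>" using k by (simp add: dist_commute)
    then have "x k \<in> V" using a2 unfolding V_def by blast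
    then show False using allU[OF k(1)] UV by auto
  qed
qed

theorem mainTheorem2:
  fixes f :: "real ^ 'n \<Rightarrow> real"
    and gradf :: "real ^ 'n \<Rightarrow> real ^ 'n"
    and x d :: "nat \<Rightarrow> real ^ 'n"
    and t :: "nat \<Rightarrow> real"
  assumes grad: "\<And>y. GDERIV f y :> gradf y"
    and C1: "continuous_on UNIV gradf"
    and step: "\<And>k. x (Suc k) = x k + t k *\<^sub>R d k"
    and t_nonneg: "\<And>k. t k \<ge> 0"
    and ga: "gradient_associated gradf d x"
    and d_acc: "accum_point d 0"
    and summ: "summable (\<lambda>k. t k * (norm (d k))\<^sup>2)"
  shows "(\<forall>a. accum_point x a \<longrightarrow> gradf a = 0)
    \<and> ((\<exists>T. \<forall>k. t k \<le> T) \<longrightarrow>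
        (bounded (range x) \<longrightarrow>
           {a. accum_point x a} \<noteq> {} \<and> compact {a. accum_point x a}
           \<and> connected {a. accum_point x a})
      \<and> (\<forall>a. accum_point x a \<and> (\<exists>e>0. \<forall>b. accum_point x b \<and> dist b a < e \<longrightarrow> b = a)
             \<longrightarrow> x \<longlonglongrightarrow> a))"
proof (intro conjI allI impI)
  fix a assume "accum_point x a"
  then show "gradf a = 0" by (rule part1[OF C1 step t_nonneg ga d_acc summ])
next
  assume "\<exists>T. \<forall>k. t k \<le> T"
  then obtain T where T: "\<And>k. t k \<le> T" by blast
  note inc = incr[OF step t_nonneg summ T]
  {
    assume "bounded (range x)"
    from part_bdd[OF inc this]
    show "{a. accum_point x a} \<noteq> {}" "compact {a. accum_point x a}" "connected {a. accum_point x a}"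
      by blast+
  }
  fix a assume H: "accum_point x a \<and> (\<exists>e>0. \<forall>b. accum_point x b \<and> dist b a < e \<longrightarrow> b = a)"
  then obtain e where e: "e > 0" "\<And>b. accum_point x b \<Longrightarrow> dist b a < e \<Longrightarrow> b = a" by blast
  show "x \<longlonglongrightarrow> a" using part_iso[OF inc _ e(1) e(2)] H by blast
qed

end
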